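(* Let $G$ be a connected graph and $r\in\mathbb{N}$. For every covering $p:C\to G$ that preserves $(r/2)$-balls there is a covering $q:G_r\to C$ such that $p_r=p\circ q$, and all such coverings $q$ are equivalent.
   Context: Graphs may have loops and parallel edges and are viewed as 1-complexes; coverings have connected covering spaces. A cycle may be a loop or a pair of parallel edges; a closed walk once around a cycle $O$ traverses every edge of $O$ exactly once. $\pi_1^r(G,x_0)$ is the subgroup of $\pi_1(G,x_0)$ generated by the classes of closed walks $W_0QW_0^-$, $W_0$ a walk from $x_0$ to a vertex $y$, $Q$ a closed walk at $y$ once around a cycle of length at most $r$, $W_0^-$ the reverse of $W_0$. The $r$-local covering $p_r:G_r\to G$ is the connected normal covering with characteristic subgroup $\pi_1^r(G,x_0)$. For a vertex $v$ of a graph $X$, $B_X(v,r/2)$ is the subgraph formed by the vertices at distance at most $r/2$ from $v$ and the edges $xy$ with $d_X(v,x)+1+d_X(y,v)\le r$. A covering $p:C\to G$ preserves $(r/2)$-balls if for every vertex $v$ of $G$ and every lift $\hat v$, $p$ maps $B_C(\hat v,r/2)$ isomorphically onto $B_G(v,r/2)$. Two coverings $q:X\to Y$, $q':X'\to Y$ are equivalent if there is a homeomorphism $h:X\to X'$ with $q'\circ h=q$. *)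

theory Defs
  imports Main
begin

text \<open>Graphs (with loops and parallel edges, viewed as 1-complexes) are represented by
  their darts (oriented edges): a set of vertices, a set of darts, a tail map and a
  fixed-point-free involution reversing darts.\<close>

record ('v, 'd) graph =
  verts :: "'v set"
  darts :: "'d set"
  tl    :: "'d \<Rightarrow> 'v"
  rv    :: "'d \<Rightarrow> 'd"

definition wf_graph :: "('v, 'd) graph \<Rightarrow> bool" where
  "wf_graph G \<longleftrightarrow> (\<forall>d\<in>darts G. tl G d \<in> verts G \<and> rv G d \<in> darts G
      \<and> rv G (rv G d) = d \<and> rv G d \<noteq> d)"

definition head :: "('v, 'd) graph \<Rightarrow> 'd \<Rightarrow> 'v" where
  "head G d = tl G (rv G d)"

definition edge_of :: "('v, 'd) graph \<Rightarrow> 'd \<Rightarrow> 'd set" where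
  "edge_of G d = {d, rv G d}"

definition walk :: "('v, 'd) graph \<Rightarrow> 'v \<Rightarrow> 'v \<Rightarrow> 'd list \<Rightarrow> bool" where
  "walk G u v W \<longleftrightarrow> u \<in> verts G \<and> v \<in> verts G \<and> set W \<subseteq> darts G \<and>
     (if W = [] then u = v
      else tl G (hd W) = u \<and> head G (last W) = v \<and>
           (\<forall>i. Suc i < length W \<longrightarrow> head G (W ! i) = tl G (W ! Suc i)))"

definition rev_walk :: "('v, 'd) graph \<Rightarrow> 'd list \<Rightarrow> 'd list" where
  "rev_walk G W = rev (map (rv G) W)"

definition connected_graph :: "('v, 'd) graph \<Rightarrow> bool" where
  "connected_graph G \<longleftrightarrow> wf_graph G \<and> verts G \<noteq> {} \<and>
     (\<forall>u\<in>verts G. \<forall>v\<in>verts G. \<exists>W. walk G u v W)"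

definition hstep :: "('v, 'd) graph \<Rightarrow> 'v \<Rightarrow> 'v \<Rightarrow> 'd list \<Rightarrow> 'd list \<Rightarrow> bool" where
  "hstep G u v W W' \<longleftrightarrow> (\<exists>xs ys d. d \<in> darts G \<and> W = xs @ [d, rv G d] @ ys \<and> W' = xs @ ys
      \<and> walk G u v W \<and> walk G u v W')"

definition homotopic :: "('v, 'd) graph \<Rightarrow> 'v \<Rightarrow> 'v \<Rightarrow> 'd list \<Rightarrow> 'd list \<Rightarrow> bool" where
  "homotopic G u v = (\<lambda>W W'. hstep G u v W W' \<or> hstep G u v W' W)\<^sup>*\<^sup>*"

text \<open>A closed walk at y once around a cycle: nonempty, closed, no repeated vertex,
  every edge of the cycle traversed exactly once (covers loops and pairs of parallel edges).\<close>
definition cycle_walk :: "('v, 'd) graph \<Rightarrow> 'v \<Rightarrow> 'd list \<Rightarrow> bool" where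
  "cycle_walk G y Q \<longleftrightarrow> Q \<noteq> [] \<and> walk G y y Q \<and> distinct (map (tl G) Q)
     \<and> distinct (map (edge_of G) Q)"

definition pi1r_generator :: "('v, 'd) graph \<Rightarrow> nat \<Rightarrow> 'v \<Rightarrow> 'd list \<Rightarrow> bool" where
  "pi1r_generator G r x0 W \<longleftrightarrow> (\<exists>y W0 Q. walk G x0 y W0 \<and> cycle_walk G y Q \<and> length Q \<le> r
     \<and> W = W0 @ Q @ rev_walk G W0)"

text \<open>pi_1^r(G,x0), as the set of closed walks at x0 whose homotopy class lies in the
  subgroup generated by the classes of the generators (products of generators and their
  inverses).\<close>
definition pi1r :: "('v, 'd) graph \<Rightarrow> nat \<Rightarrow> 'v \<Rightarrow> 'd list set" where
  "pi1r G r x0 = {W. walk G x0 x0 W \<and> (\<exists>gs. (\<forall>g\<in>set gs. pi1r_generator G r x0 g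
        \<or> (\<exists>g'. pi1r_generator G r x0 g' \<and> g = rev_walk G g'))
      \<and> homotopic G x0 x0 W (concat gs))}"

definition covering :: "('a, 'b) graph \<Rightarrow> ('v, 'd) graph \<Rightarrow> ('a \<Rightarrow> 'v) \<Rightarrow> ('b \<Rightarrow> 'd) \<Rightarrow> bool" where
  "covering X Y fv fd \<longleftrightarrow> connected_graph X \<and> wf_graph Y \<and>
     (\<forall>v\<in>verts X. fv v \<in> verts Y) \<and>
     (\<forall>d\<in>darts X. fd d \<in> darts Y \<and> tl Y (fd d) = fv (tl X d) \<and> rv Y (fd d) = fd (rv X d)) \<and>
     fv ` verts X = verts Y \<and>
     (\<forall>v\<in>verts X. bij_betw fd {d\<in>darts X. tl X d = v} {d\<in>darts Y. tl Y d = fv v})"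

text \<open>Characteristic subgroup p_*(pi_1(X, xh)) in pi_1(Y, p xh), as closed walks at p xh.\<close>
definition char_subgroup :: "('a, 'b) graph \<Rightarrow> ('v, 'd) graph \<Rightarrow> ('a \<Rightarrow> 'v) \<Rightarrow> ('b \<Rightarrow> 'd)
    \<Rightarrow> 'a \<Rightarrow> 'd list set" where
  "char_subgroup X Y fv fd xh = {W. walk Y (fv xh) (fv xh) W \<and>
      (\<exists>Wh. walk X xh xh Wh \<and> homotopic Y (fv xh) (fv xh) W (map fd Wh))}"

definition dist :: "('v, 'd) graph \<Rightarrow> 'v \<Rightarrow> 'v \<Rightarrow> nat" where
  "dist G u v = (LEAST n. \<exists>W. walk G u v W \<and> length W = n)"

text \<open>B_X(v, r/2): vertices x with d(v,x) \<le> r/2 and (darts of) edges xy with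
  d(v,x)+1+d(y,v) \<le> r.\<close>
definition ball_verts :: "('v, 'd) graph \<Rightarrow> 'v \<Rightarrow> nat \<Rightarrow> 'v set" where
  "ball_verts X v r = {x\<in>verts X. 2 * dist X v x \<le> r}"

definition ball_darts :: "('v, 'd) graph \<Rightarrow> 'v \<Rightarrow> nat \<Rightarrow> 'd set" where
  "ball_darts X v r = {d\<in>darts X. dist X v (tl X d) + 1 + dist X (head X d) v \<le> r}"

definition preserves_balls :: "('a, 'b) graph \<Rightarrow> ('v, 'd) graph \<Rightarrow> ('a \<Rightarrow> 'v) \<Rightarrow> ('b \<Rightarrow> 'd)
    \<Rightarrow> nat \<Rightarrow> bool" where
  "preserves_balls X Y fv fd r \<longleftrightarrow> (\<forall>v\<in>verts Y. \<forall>vh\<in>verts X. fv vh = v \<longrightarrow>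
      bij_betw fv (ball_verts X vh r) (ball_verts Y v r) \<and>
      bij_betw fd (ball_darts X vh r) (ball_darts Y v r))"

definition graph_iso :: "('a, 'b) graph \<Rightarrow> ('v, 'd) graph \<Rightarrow> ('a \<Rightarrow> 'v) \<Rightarrow> ('b \<Rightarrow> 'd) \<Rightarrow> bool" where
  "graph_iso X Y hv hdt \<longleftrightarrow> bij_betw hv (verts X) (verts Y) \<and> bij_betw hdt (darts X) (darts Y) \<and>
     (\<forall>d\<in>darts X. tl Y (hdt d) = hv (tl X d) \<and> rv Y (hdt d) = hdt (rv X d))"

definition equivalent_coverings :: "('a, 'b) graph \<Rightarrow> ('a \<Rightarrow> 'v) \<Rightarrow> ('b \<Rightarrow> 'd)
    \<Rightarrow> ('c, 'e) graph \<Rightarrow> ('c \<Rightarrow> 'v) \<Rightarrow> ('e \<Rightarrow> 'd) \<Rightarrow> bool" where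
  "equivalent_coverings X qv qd X' qv' qd' \<longleftrightarrow> (\<exists>hv hdt. graph_iso X X' hv hdt \<and>
     (\<forall>v\<in>verts X. qv' (hv v) = qv v) \<and> (\<forall>d\<in>darts X. qd' (hdt d) = qd d))"

end

theory Submission
  imports Defs
begin

fun walkr :: "('v, 'd) graph \<Rightarrow> 'v \<Rightarrow> 'v \<Rightarrow> 'd list \<Rightarrow> bool" where
  "walkr G u v [] = (u \<in> verts G \<and> u = v)"
| "walkr G u v (d # W) = (d \<in> darts G \<and> tl G d = u \<and> walkr G (head G d) v W)"

lemma wf_head: "wf_graph G \<Longrightarrow> d \<in> darts G \<Longrightarrow> head G d \<in> verts G"
  unfolding wf_graph_def head_def by auto

lemma wf_tl: "wf_graph G \<Longrightarrow> d \<in> darts G \<Longrightarrow> tl G d \<in> verts G"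
  unfolding wf_graph_def by auto

lemma wf_rv: "wf_graph G \<Longrightarrow> d \<in> darts G \<Longrightarrow> rv G d \<in> darts G \<and> rv G (rv G d) = d"
  unfolding wf_graph_def by auto

lemma walkr_verts: "wf_graph G \<Longrightarrow> walkr G u v W \<Longrightarrow> u \<in> verts G \<and> v \<in> verts G"
  by (induction W arbitrary: u) (auto simp: wf_tl)

lemma walk_walkr: "wf_graph G \<Longrightarrow> walk G u v W \<longleftrightarrow> walkr G u v W"
proof (induction W arbitrary: u)
  case Nil
  then show ?case by (auto simp: walk_def)
next
  case (Cons d W)
  show ?case
  proof (cases W)
    case Nil
    then show ?thesis using Cons.prems by (auto simp: walk_def wf_head wf_tl)
  next
    case (Cons e W')
    have "walk G u v (d # W) \<longleftrightarrow> d \<in> darts G \<and> tl G d = u \<and> walk G (head G d) v W"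
    proof
      assume H: "walk G u v (d # W)"
      have A: "\<forall>i. Suc i < length W \<longrightarrow> head G (W ! i) = tl G (W ! Suc i)"
      proof (intro allI impI)
        fix i assume "Suc i < length W"
        then show "head G (W ! i) = tl G (W ! Suc i)" using H unfolding walk_def
          by (metis Suc_less_eq length_Cons list.distinct(1) nth_Cons_Suc)
      qed
      have "head G d = tl G (W ! 0)" using H unfolding walk_def using Cons by fastforce
      then show "d \<in> darts G \<and> tl G d = u \<and> walk G (head G d) v W"
        using H A Cons Cons.prems unfolding walk_def by (auto simp: wf_head wf_tl hd_conv_nth)
    next
      assume H: "d \<in> darts G \<and> tl G d = u \<and> walk G (head G d) v W"
      have "\<forall>i. Suc i < length (d # W) \<longrightarrow> head G ((d # W) ! i) = tl G ((d # W) ! Suc i)"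
      proof (intro allI impI)
        fix i assume "Suc i < length (d # W)"
        then show "head G ((d # W) ! i) = tl G ((d # W) ! Suc i)"
          using H Cons unfolding walk_def
          by (cases i) (auto simp: hd_conv_nth)
      qed
      then show "walk G u v (d # W)" using H Cons Cons.prems unfolding walk_def
        by (auto simp: wf_tl)
    qed
    then show ?thesis using Cons.IH Cons.prems by simp
  qed
qed


lemma walk_Nil[simp]: "walk G u v [] \<longleftrightarrow> u \<in> verts G \<and> u = v"
  by (auto simp: walk_def)

lemma walk_Cons: "wf_graph G \<Longrightarrow> walk G u v (d # W) \<longleftrightarrow> d \<in> darts G \<and> tl G d = u \<and> walk G (head G d) v W"
  by (simp add: walk_walkr)

lemma walk_verts: "wf_graph G \<Longrightarrow> walk G u v W \<Longrightarrow> u \<in> verts G \<and> v \<in> verts G"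
  by (auto simp: walk_def)

lemma walk_darts: "walk G u v W \<Longrightarrow> set W \<subseteq> darts G"
  by (auto simp: walk_def)

lemma walk_append: "wf_graph G \<Longrightarrow> walk G u w (W1 @ W2) \<longleftrightarrow> (\<exists>v. walk G u v W1 \<and> walk G v w W2)"
  by (induction W1 arbitrary: u) (auto simp: walk_Cons walk_verts wf_tl)

lemma walk_append_I: "wf_graph G \<Longrightarrow> walk G u v W1 \<Longrightarrow> walk G v w W2 \<Longrightarrow> walk G u w (W1 @ W2)"
  using walk_append by metis

lemma rev_walk_Nil[simp]: "rev_walk G [] = []"
  by (simp add: rev_walk_def)

lemma rev_walk_Cons: "rev_walk G (d # W) = rev_walk G W @ [rv G d]"
  by (simp add: rev_walk_def)

lemma rev_walk_append: "rev_walk G (W1 @ W2) = rev_walk G W2 @ rev_walk G W1"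
  by (simp add: rev_walk_def)

lemma length_rev_walk[simp]: "length (rev_walk G W) = length W"
  by (simp add: rev_walk_def)

lemma rev_walk_rev_walk: "wf_graph G \<Longrightarrow> set W \<subseteq> darts G \<Longrightarrow> rev_walk G (rev_walk G W) = W"
  unfolding rev_walk_def by (induction W) (auto simp: wf_rv rev_map)

lemma walk_rev: "wf_graph G \<Longrightarrow> walk G u v W \<Longrightarrow> walk G v u (rev_walk G W)"
proof (induction W arbitrary: u)
  case Nil
  then show ?case by auto
next
  case (Cons d W)
  then have d: "d \<in> darts G" "tl G d = u" "walk G (head G d) v W" by (auto simp: walk_Cons)
  have "walk G (head G d) u [rv G d]" using d Cons.prems
    by (auto simp: walk_Cons wf_rv head_def wf_tl)
  then show ?case using Cons.IH[OF Cons.prems(1) d(3)] Cons.prems(1)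
    by (simp add: rev_walk_Cons walk_append_I)
qed


definition dlift :: "('a, 'b) graph \<Rightarrow> ('b \<Rightarrow> 'd) \<Rightarrow> 'a \<Rightarrow> 'd \<Rightarrow> 'b" where
  "dlift X fd x d = (THE e. e \<in> darts X \<and> tl X e = x \<and> fd e = d)"

fun lend :: "('a, 'b) graph \<Rightarrow> ('b \<Rightarrow> 'd) \<Rightarrow> 'a \<Rightarrow> 'd list \<Rightarrow> 'a" where
  "lend X fd x [] = x"
| "lend X fd x (d # W) = lend X fd (head X (dlift X fd x d)) W"

lemma lend_append: "lend X fd x (W1 @ W2) = lend X fd (lend X fd x W1) W2"
  by (induction W1 arbitrary: x) auto

lemma cov_wfX: "covering X Y fv fd \<Longrightarrow> wf_graph X"
  by (simp add: covering_def connected_graph_def)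

lemma cov_wfY: "covering X Y fv fd \<Longrightarrow> wf_graph Y"
  by (simp add: covering_def)

lemma cov_dart: "covering X Y fv fd \<Longrightarrow> e \<in> darts X \<Longrightarrow>
    fd e \<in> darts Y \<and> tl Y (fd e) = fv (tl X e) \<and> rv Y (fd e) = fd (rv X e)"
  by (simp add: covering_def)

lemma cov_vert: "covering X Y fv fd \<Longrightarrow> x \<in> verts X \<Longrightarrow> fv x \<in> verts Y"
  by (simp add: covering_def)

lemma cov_head: "covering X Y fv fd \<Longrightarrow> e \<in> darts X \<Longrightarrow> fv (head X e) = head Y (fd e)"
proof -
  assume c: "covering X Y fv fd" and e: "e \<in> darts X"
  have r: "rv X e \<in> darts X" using wf_rv[OF cov_wfX[OF c] e] by auto
  have "fv (head X e) = tl Y (fd (rv X e))" using cov_dart[OF c r] by (simp add: head_def)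
  also have "\<dots> = head Y (fd e)" using cov_dart[OF c e] by (simp add: head_def)
  finally show ?thesis .
qed

lemma dlift_unique:
  assumes c: "covering X Y fv fd" and e: "e \<in> darts X" "tl X e = x" "fd e = d"
  shows "dlift X fd x d = e"
proof -
  have x: "x \<in> verts X" using e wf_tl[OF cov_wfX[OF c]] by auto
  have inj: "inj_on fd {d\<in>darts X. tl X d = x}" using c x by (auto simp: covering_def bij_betw_def)
  show ?thesis unfolding dlift_def
    by (rule the_equality) (use e inj in \<open>auto simp: inj_on_def\<close>)
qed

lemma dlift:
  assumes c: "covering X Y fv fd" and x: "x \<in> verts X" and d: "d \<in> darts Y" "tl Y d = fv x"
  shows "dlift X fd x d \<in> darts X \<and> tl X (dlift X fd x d) = x \<and> fd (dlift X fd x d) = d"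
proof -
  have "bij_betw fd {d\<in>darts X. tl X d = x} {d\<in>darts Y. tl Y d = fv x}" using c x by (simp add: covering_def)
  then have "d \<in> fd ` {d\<in>darts X. tl X d = x}" using d by (simp add: bij_betw_def)
  then obtain e where "e \<in> darts X" "tl X e = x" "fd e = d" by auto
  then show ?thesis using dlift_unique[OF c] by auto
qed

lemma map_walk: "covering X Y fv fd \<Longrightarrow> walk X a b W \<Longrightarrow> walk Y (fv a) (fv b) (map fd W)"
proof (induction W arbitrary: a)
  case Nil
  then show ?case by (auto simp: cov_vert)
next
  case (Cons e W)
  have wX: "wf_graph X" and wY: "wf_graph Y" using cov_wfX[OF Cons.prems(1)] cov_wfY[OF Cons.prems(1)] by auto
  from Cons.prems have e: "e \<in> darts X" "tl X e = a" "walk X (head X e) b W" by (auto simp: walk_Cons wX)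
  have "walk Y (fv (head X e)) (fv b) (map fd W)" using Cons.IH[OF Cons.prems(1) e(3)] .
  then show ?case using e cov_head[OF Cons.prems(1) e(1)] cov_dart[OF Cons.prems(1) e(1)]
    by (simp add: walk_Cons wY)
qed

lemma lend_walk:
  assumes c: "covering X Y fv fd"
  shows "x \<in> verts X \<Longrightarrow> walk Y (fv x) v W \<Longrightarrow>
    (\<exists>W'. walk X x (lend X fd x W) W' \<and> map fd W' = W) \<and> fv (lend X fd x W) = v \<and> lend X fd x W \<in> verts X"
proof (induction W arbitrary: x)
  case Nil
  then show ?case by auto
next
  case (Cons d W)
  note wfX = cov_wfX[OF c] and wfY = cov_wfY[OF c]
  from Cons.prems have d: "d \<in> darts Y" "tl Y d = fv x" "walk Y (head Y d) v W" by (auto simp: walk_Cons wfY)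
  define e where "e = dlift X fd x d"
  have e: "e \<in> darts X" "tl X e = x" "fd e = d" using dlift[OF c Cons.prems(1) d(1,2)] e_def by auto
  have h: "head X e \<in> verts X" "fv (head X e) = head Y d" using e wf_head[OF wfX] cov_head[OF c] by auto
  from Cons.IH[OF h(1)] d(3) h(2) obtain W' where
    "walk X (head X e) (lend X fd (head X e) W) W'" "map fd W' = W"
    "fv (lend X fd (head X e) W) = v" "lend X fd (head X e) W \<in> verts X" by auto
  then show ?case using e by (auto simp: e_def[symmetric] walk_Cons wfX intro!: exI[of _ "e # W'"])
qed

lemma lend_map:
  assumes c: "covering X Y fv fd"
  shows "walk X x x' W' \<Longrightarrow> lend X fd x (map fd W') = x'"
proof (induction W' arbitrary: x)
  case Nil
  then show ?case by simp
next
  case (Cons e W)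
  then show ?case using dlift_unique[OF c] cov_wfX[OF c] by (auto simp: walk_Cons)
qed

lemma map_rev_walk: "covering X Y fv fd \<Longrightarrow> set W \<subseteq> darts X \<Longrightarrow>
    map fd (rev_walk X W) = rev_walk Y (map fd W)"
  unfolding rev_walk_def by (induction W) (auto simp: cov_dart)

lemma lend_rev:
  assumes c: "covering X Y fv fd" and x: "x \<in> verts X" and W: "walk Y (fv x) v W"
  shows "lend X fd (lend X fd x W) (rev_walk Y W) = x"
proof -
  obtain W' where W': "walk X x (lend X fd x W) W'" "map fd W' = W" using lend_walk[OF c x W] by auto
  have w: "walk X (lend X fd x W) x (rev_walk X W')" using walk_rev[OF cov_wfX[OF c] W'(1)] .
  have "map fd (rev_walk X W') = rev_walk Y W" using map_rev_walk[OF c walk_darts[OF W'(1)]] W'(2) by simp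
  have "lend X fd (lend X fd x W) (map fd (rev_walk X W')) = x" by (rule lend_map[OF c w])
  then show ?thesis using \<open>map fd (rev_walk X W') = rev_walk Y W\<close> by simp
qed

lemma lend_inj:
  assumes c: "covering X Y fv fd" and a: "a \<in> verts X" "fv a = u" and b: "b \<in> verts X" "fv b = u"
    and R: "walk Y u v R" and eq: "lend X fd a R = lend X fd b R"
  shows "a = b"
proof -
  have "a = lend X fd (lend X fd a R) (rev_walk Y R)" using lend_rev[OF c a(1)] a R by simp
  also have "\<dots> = lend X fd (lend X fd b R) (rev_walk Y R)" using eq by simp
  also have "\<dots> = b" using lend_rev[OF c b(1)] b R by simp
  finally show ?thesis .
qed

lemma lend_backtrack:
  assumes c: "covering X Y fv fd" and z: "z \<in> verts X" and d: "d \<in> darts Y" "tl Y d = fv z"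
  shows "lend X fd z [d, rv Y d] = z"
proof -
  define e where "e = dlift X fd z d"
  have e: "e \<in> darts X" "tl X e = z" "fd e = d" using dlift[OF c z d] e_def by auto
  have r: "rv X e \<in> darts X" "rv X (rv X e) = e" using wf_rv[OF cov_wfX[OF c] e(1)] by auto
  have "dlift X fd (head X e) (rv Y d) = rv X e"
    by (rule dlift_unique[OF c r(1)]) (use e cov_dart[OF c e(1)] in \<open>auto simp: head_def\<close>)
  then show ?thesis using e r by (simp add: e_def[symmetric] head_def)
qed

lemma lend_homotopic:
  assumes c: "covering X Y fv fd" and h: "homotopic Y u v W W'" and x: "x \<in> verts X" "fv x = u"
  shows "lend X fd x W = lend X fd x W'"
proof -
  have hs: "lend X fd x A = lend X fd x B" if "hstep Y u v A B" for A B
  proof -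
    from that obtain xs ys d where H: "d \<in> darts Y" "A = xs @ [d, rv Y d] @ ys" "B = xs @ ys" "walk Y u v A"
      unfolding hstep_def by blast
    then obtain m where m: "walk Y u m xs" "walk Y m v ([d, rv Y d] @ ys)"
      using walk_append[OF cov_wfY[OF c], of u v xs "[d, rv Y d] @ ys"] by auto
    then have tm: "tl Y d = m" using walk_Cons[OF cov_wfY[OF c]] by auto
    have z: "lend X fd x xs \<in> verts X" "fv (lend X fd x xs) = m" using lend_walk[OF c x(1)] m(1) x(2) by auto
    show ?thesis using H lend_backtrack[OF c z(1) H(1)] z tm by (simp add: lend_append)
  qed
  show ?thesis using h unfolding homotopic_def
  proof (induction rule: rtranclp_induct)
    case base
    then show ?case by simp
  next
    case (step y z)
    then have "lend X fd x y = lend X fd x z" using hs[of y z] hs[of z y] by (metis (no_types))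
    then show ?case using step.IH by simp
  qed
qed


lemma cov_conn: "covering X Y fv fd \<Longrightarrow> connected_graph X"
  by (simp add: covering_def)

lemma conn_walk: "connected_graph X \<Longrightarrow> u \<in> verts X \<Longrightarrow> v \<in> verts X \<Longrightarrow> \<exists>W. walk X u v W"
  by (simp add: connected_graph_def)

lemma cov_star: "covering X Y fv fd \<Longrightarrow> v \<in> verts X \<Longrightarrow>
    bij_betw fd {d\<in>darts X. tl X d = v} {d\<in>darts Y. tl Y d = fv v}"
  by (simp add: covering_def)

lemma lifting:
  assumes cX: "covering X G pv pd" and cY: "covering Y G qv qd"
    and xh: "xh \<in> verts X" and yh: "yh \<in> verts Y" and base: "pv xh = qv yh"
    and H: "\<And>U. walk G (qv yh) (qv yh) U \<Longrightarrow> lend Y qd yh U = yh \<Longrightarrow> lend X pd xh U = xh"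
  shows "\<exists>hv hd. covering Y X hv hd \<and> hv yh = xh \<and> (\<forall>v\<in>verts Y. pv (hv v) = qv v)
            \<and> (\<forall>d\<in>darts Y. pd (hd d) = qd d)"
proof -
  note wfX = cov_wfX[OF cX] and wfY = cov_wfX[OF cY] and wfG = cov_wfY[OF cX]
  define hv where "hv v = lend X pd xh (map qd (SOME W. walk Y yh v W))" for v
  define hd where "hd d = dlift X pd (hv (tl Y d)) (qd d)" for d
  have wd: "hv v = lend X pd xh (map qd W)" if W: "walk Y yh v W" for v W
  proof -
    define W0 where "W0 = (SOME W. walk Y yh v W)"
    have W0: "walk Y yh v W0" unfolding W0_def using W by (rule someI)
    define A where "A = map qd W"
    define B where "B = map qd W0"
    have A: "walk G (qv yh) (qv v) A" unfolding A_def by (rule map_walk[OF cY W])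
    have B: "walk G (qv yh) (qv v) B" unfolding B_def by (rule map_walk[OF cY W0])
    have lA: "lend Y qd yh A = v" unfolding A_def by (rule lend_map[OF cY W])
    have lB: "lend Y qd yh B = v" unfolding B_def by (rule lend_map[OF cY W0])
    have U: "walk G (qv yh) (qv yh) (A @ rev_walk G B)"
      using walk_append_I[OF wfG A walk_rev[OF wfG B]] .
    have "lend Y qd yh (A @ rev_walk G B) = yh"
      using lend_rev[OF cY yh B] lA lB by (simp add: lend_append)
    then have "lend X pd xh (A @ rev_walk G B) = xh" using H[OF U] by simp
    then have e1: "lend X pd (lend X pd xh A) (rev_walk G B) = xh" by (simp add: lend_append)
    have e2: "lend X pd (lend X pd xh B) (rev_walk G B) = xh" using lend_rev[OF cX xh] B base by simp
    have a: "lend X pd xh A \<in> verts X" "pv (lend X pd xh A) = qv v" using lend_walk[OF cX xh] A base by auto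
    have b: "lend X pd xh B \<in> verts X" "pv (lend X pd xh B) = qv v" using lend_walk[OF cX xh] B base by auto
    have "lend X pd xh A = lend X pd xh B"
      using lend_inj[OF cX a b walk_rev[OF wfG B]] e1 e2 by simp
    then show ?thesis unfolding hv_def W0_def[symmetric] B_def A_def by simp
  qed
  have hvv: "hv v \<in> verts X \<and> pv (hv v) = qv v" if v: "v \<in> verts Y" for v
  proof -
    obtain W where W: "walk Y yh v W" using conn_walk[OF cov_conn[OF cY] yh v] by auto
    show ?thesis using wd[OF W] lend_walk[OF cX xh] map_walk[OF cY W] base by auto
  qed
  have hvy: "hv yh = xh" using wd[of yh "[]"] yh by simp
  have hdd: "hd d \<in> darts X \<and> tl X (hd d) = hv (tl Y d) \<and> pd (hd d) = qd d" if d: "d \<in> darts Y" for d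
  proof -
    have "tl Y d \<in> verts Y" using wf_tl[OF wfY d] .
    then show ?thesis unfolding hd_def using dlift[OF cX] hvv cov_dart[OF cY d] by auto
  qed
  have hvhead: "hv (head Y d) = head X (hd d)" if d: "d \<in> darts Y" for d
  proof -
    have t: "tl Y d \<in> verts Y" using wf_tl[OF wfY d] .
    obtain W where W: "walk Y yh (tl Y d) W" using conn_walk[OF cov_conn[OF cY] yh t] by auto
    have W': "walk Y yh (head Y d) (W @ [d])"
      using walk_append_I[OF wfY W] d wfY by (simp add: walk_Cons wf_head)
    show ?thesis using wd[OF W'] wd[OF W] by (simp add: lend_append hd_def)
  qed
  have hdrv: "rv X (hd d) = hd (rv Y d)" if d: "d \<in> darts Y" for d
  proof -
    have r: "rv Y d \<in> darts Y" using wf_rv[OF wfY d] by auto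
    have e: "hd d \<in> darts X" using hdd[OF d] by auto
    have "dlift X pd (hv (tl Y (rv Y d))) (qd (rv Y d)) = rv X (hd d)"
    proof (rule dlift_unique[OF cX])
      show "rv X (hd d) \<in> darts X" using wf_rv[OF wfX e] by auto
      show "tl X (rv X (hd d)) = hv (tl Y (rv Y d))" using hvhead[OF d] by (simp add: head_def)
      show "pd (rv X (hd d)) = qd (rv Y d)" using cov_dart[OF cX e] cov_dart[OF cY d] hdd[OF d] by simp
    qed
    then show ?thesis by (simp add: hd_def)
  qed
  have surj: "hv ` verts Y = verts X"
  proof
    show "hv ` verts Y \<subseteq> verts X" using hvv by auto
    show "verts X \<subseteq> hv ` verts Y"
    proof
      fix x assume x: "x \<in> verts X"
      obtain V where V: "walk X xh x V" using conn_walk[OF cov_conn[OF cX] xh x] by auto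
      have U: "walk G (qv yh) (pv x) (map pd V)" using map_walk[OF cX V] base by simp
      obtain W' where W': "walk Y yh (lend Y qd yh (map pd V)) W'" "map qd W' = map pd V"
        using lend_walk[OF cY yh U] by auto
      have "hv (lend Y qd yh (map pd V)) = x" using wd[OF W'(1)] W'(2) lend_map[OF cX V] by simp
      moreover have "lend Y qd yh (map pd V) \<in> verts Y" using lend_walk[OF cY yh U] by auto
      ultimately show "x \<in> hv ` verts Y" by force
    qed
  qed
  have star: "bij_betw hd {d\<in>darts Y. tl Y d = v} {d\<in>darts X. tl X d = hv v}" if v: "v \<in> verts Y" for v
  proof -
    have bq: "bij_betw qd {d\<in>darts Y. tl Y d = v} {d\<in>darts G. tl G d = qv v}" using cov_star[OF cY v] .
    have bp: "bij_betw pd {d\<in>darts X. tl X d = hv v} {d\<in>darts G. tl G d = pv (hv v)}"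
      using cov_star[OF cX conjunct1[OF hvv[OF v]]] .
    show ?thesis unfolding bij_betw_def
    proof
      show "inj_on hd {d \<in> darts Y. tl Y d = v}"
      proof (rule inj_onI)
        fix a b assume a: "a \<in> {d \<in> darts Y. tl Y d = v}" and b: "b \<in> {d \<in> darts Y. tl Y d = v}"
          and e: "hd a = hd b"
        then have "qd a = qd b" using hdd by (metis (no_types, lifting) mem_Collect_eq)
        then show "a = b" using bq a b by (auto simp: bij_betw_def inj_on_def)
      qed
      show "hd ` {d \<in> darts Y. tl Y d = v} = {d \<in> darts X. tl X d = hv v}"
      proof
        show "hd ` {d \<in> darts Y. tl Y d = v} \<subseteq> {d \<in> darts X. tl X d = hv v}" using hdd by auto
        show "{d \<in> darts X. tl X d = hv v} \<subseteq> hd ` {d \<in> darts Y. tl Y d = v}"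
        proof
          fix e assume e: "e \<in> {d \<in> darts X. tl X d = hv v}"
          then have "pd e \<in> {d\<in>darts G. tl G d = qv v}" using bp hvv[OF v] by (auto simp: bij_betw_def)
          then obtain d where d: "d \<in> {d\<in>darts Y. tl Y d = v}" "qd d = pd e" using bq
            by (metis (no_types, lifting) bij_betw_def imageE)
          have "hd d = e" unfolding hd_def using dlift_unique[OF cX] e d by auto
          then show "e \<in> hd ` {d \<in> darts Y. tl Y d = v}" using d by auto
        qed
      qed
    qed
  qed
  have "covering Y X hv hd"
    unfolding covering_def using cov_conn[OF cY] wfX hvv hdd hdrv surj star by auto
  then show ?thesis using hvy hvv hdd by blast
qed


definition morph :: "('a, 'b) graph \<Rightarrow> ('c, 'e) graph \<Rightarrow> ('a \<Rightarrow> 'c) \<Rightarrow> ('b \<Rightarrow> 'e) \<Rightarrow> bool" where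
  "morph Y X hv hk \<longleftrightarrow> (\<forall>v\<in>verts Y. hv v \<in> verts X) \<and>
     (\<forall>d\<in>darts Y. hk d \<in> darts X \<and> tl X (hk d) = hv (tl Y d) \<and> rv X (hk d) = hk (rv Y d))"

lemma cov_morph: "covering Y X hv hk \<Longrightarrow> morph Y X hv hk"
  by (simp add: covering_def morph_def)

lemma morph_id: "morph Y Y id id"
  by (simp add: morph_def)

lemma morph_comp: "morph Y X hv hk \<Longrightarrow> morph X Z gv gd \<Longrightarrow> morph Y Z (gv \<circ> hv) (gd \<circ> hk)"
  by (simp add: morph_def)

lemma morph_walk:
  assumes m: "morph Y X hv hk" and wY: "wf_graph Y" and wX: "wf_graph X"
  shows "walk Y a b W \<Longrightarrow> walk X (hv a) (hv b) (map hk W)"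
proof (induction W arbitrary: a)
  case Nil
  then show ?case using m by (auto simp: morph_def)
next
  case (Cons d W)
  then have d: "d \<in> darts Y" "tl Y d = a" "walk Y (head Y d) b W" by (auto simp: walk_Cons wY)
  have r: "rv Y d \<in> darts Y" using wf_rv[OF wY d(1)] by auto
  have "head X (hk d) = hv (head Y d)" using m d(1) r by (auto simp: morph_def head_def)
  then show ?case using Cons.IH[OF d(3)] d m by (auto simp: walk_Cons wX morph_def)
qed

lemma morph_unique:
  assumes cX: "covering X G pv pd" and cY: "connected_graph Y" and yh: "yh \<in> verts Y"
    and m1: "morph Y X hv hk" and m2: "morph Y X hv' hk'"
    and eqd: "\<forall>d\<in>darts Y. pd (hk d) = pd (hk' d)" and eqb: "hv yh = hv' yh"
  shows "(\<forall>v\<in>verts Y. hv v = hv' v) \<and> (\<forall>d\<in>darts Y. hk d = hk' d)"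
proof -
  have wY: "wf_graph Y" using cY by (simp add: connected_graph_def)
  note wX = cov_wfX[OF cX]
  have V: "hv v = hv' v" if v: "v \<in> verts Y" for v
  proof -
    obtain W where W: "walk Y yh v W" using conn_walk[OF cY yh v] by auto
    have w1: "walk X (hv yh) (hv v) (map hk W)" using morph_walk[OF m1 wY wX W] .
    have w2: "walk X (hv' yh) (hv' v) (map hk' W)" using morph_walk[OF m2 wY wX W] .
    have e: "map pd (map hk W) = map pd (map hk' W)" using eqd walk_darts[OF W] by (auto intro!: map_cong)
    have "hv v = lend X pd (hv yh) (map pd (map hk W))" using lend_map[OF cX w1] by simp
    also have "\<dots> = lend X pd (hv' yh) (map pd (map hk' W))" by (simp only: e eqb)
    also have "\<dots> = hv' v" using lend_map[OF cX w2] by simp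
    finally show ?thesis .
  qed
  have D: "hk d = hk' d" if d: "d \<in> darts Y" for d
  proof -
    have t: "tl Y d \<in> verts Y" using wf_tl[OF wY d] .
    have "dlift X pd (hv (tl Y d)) (pd (hk d)) = hk d"
      using dlift_unique[OF cX] m1 d by (auto simp: morph_def)
    moreover have "dlift X pd (hv (tl Y d)) (pd (hk d)) = hk' d"
      using dlift_unique[OF cX] m2 d V[OF t] eqd by (auto simp: morph_def)
    ultimately show ?thesis by simp
  qed
  show ?thesis using V D by auto
qed

lemma pi1r_lend:
  assumes c: "covering X G fv fd"
    and CYC: "\<And>y Q z. cycle_walk G y Q \<Longrightarrow> length Q \<le> r \<Longrightarrow> z \<in> verts X \<Longrightarrow> fv z = y \<Longrightarrow> lend X fd z Q = z"
    and z: "z \<in> verts X" "fv z = x0" and U: "U \<in> pi1r G r x0"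
  shows "lend X fd z U = z"
proof -
  note wfG = cov_wfY[OF c]
  have gen: "walk G x0 x0 g \<and> (\<forall>z\<in>verts X. fv z = x0 \<longrightarrow> lend X fd z g = z)"
    if g: "pi1r_generator G r x0 g" for g
  proof -
    from g obtain y W0 Q where H: "walk G x0 y W0" "cycle_walk G y Q" "length Q \<le> r"
      "g = W0 @ Q @ rev_walk G W0" unfolding pi1r_generator_def by blast
    have Q: "walk G y y Q" using H(2) by (simp add: cycle_walk_def)
    have "walk G x0 x0 g" using H(4) walk_append_I[OF wfG H(1) walk_append_I[OF wfG Q walk_rev[OF wfG H(1)]]]
      by simp
    moreover have "lend X fd z g = z" if z: "z \<in> verts X" "fv z = x0" for z
    proof -
      have a: "lend X fd z W0 \<in> verts X" "fv (lend X fd z W0) = y" using lend_walk[OF c z(1)] H(1) z(2) by auto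
      have "lend X fd (lend X fd z W0) Q = lend X fd z W0" using CYC[OF H(2,3) a] .
      then show ?thesis using H(4) lend_rev[OF c z(1)] H(1) z(2) by (simp add: lend_append)
    qed
    ultimately show ?thesis by blast
  qed
  have gen2: "\<forall>z\<in>verts X. fv z = x0 \<longrightarrow> lend X fd z g = z"
    if g: "pi1r_generator G r x0 g \<or> (\<exists>g'. pi1r_generator G r x0 g' \<and> g = rev_walk G g')" for g
    using g
  proof
    assume "pi1r_generator G r x0 g" then show ?thesis using gen by blast
  next
    assume "\<exists>g'. pi1r_generator G r x0 g' \<and> g = rev_walk G g'"
    then obtain g' where g': "pi1r_generator G r x0 g'" "g = rev_walk G g'" by blast
    have w: "walk G x0 x0 g'" and l: "\<forall>z\<in>verts X. fv z = x0 \<longrightarrow> lend X fd z g' = z" using gen[OF g'(1)] by auto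
    have wr: "walk G x0 x0 (rev_walk G g')" using walk_rev[OF wfG w] .
    have rr: "rev_walk G (rev_walk G g') = g'" using rev_walk_rev_walk[OF wfG walk_darts[OF w]] .
    show ?thesis
    proof (intro ballI impI)
      fix z assume z: "z \<in> verts X" "fv z = x0"
      define a where "a = lend X fd z (rev_walk G g')"
      have a: "a \<in> verts X" "fv a = x0" using lend_walk[OF c z(1)] wr z(2) a_def by auto
      have "lend X fd a (rev_walk G (rev_walk G g')) = z" using lend_rev[OF c z(1)] wr z(2) a_def by simp
      then have "lend X fd a g' = z" using rr by simp
      then show "lend X fd z g = z" using l a g'(2) a_def by simp
    qed
  qed
  from U obtain gs where gs: "\<forall>g\<in>set gs. pi1r_generator G r x0 g \<or> (\<exists>g'. pi1r_generator G r x0 g' \<and> g = rev_walk G g')"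
    "homotopic G x0 x0 U (concat gs)" unfolding pi1r_def by blast
  have "\<forall>z\<in>verts X. fv z = x0 \<longrightarrow> lend X fd z (concat gs) = z" using gs(1)
  proof (induction gs)
    case Nil
    then show ?case by simp
  next
    case (Cons g gs)
    then show ?case using gen2[of g] by (simp add: lend_append)
  qed
  then show ?thesis using lend_homotopic[OF c gs(2) z] z by simp
qed


lemma dist_le: "walk X u w W \<Longrightarrow> dist X u w \<le> length W"
proof -
  assume "walk X u w W"
  then have "\<exists>W'. walk X u w W' \<and> length W' = length W" by blast
  then show ?thesis unfolding dist_def by (rule Least_le)
qed

lemma dist_walk: "connected_graph X \<Longrightarrow> u \<in> verts X \<Longrightarrow> w \<in> verts X \<Longrightarrow>
    \<exists>W. walk X u w W \<and> length W = dist X u w"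
proof -
  assume a: "connected_graph X" "u \<in> verts X" "w \<in> verts X"
  obtain W where "walk X u w W" using conn_walk[OF a] by blast
  then have "\<exists>n W. walk X u w W \<and> length W = n" by blast
  then show ?thesis unfolding dist_def by (rule LeastI_ex)
qed

lemma dist_sym_le: "connected_graph X \<Longrightarrow> u \<in> verts X \<Longrightarrow> w \<in> verts X \<Longrightarrow> dist X w u \<le> dist X u w"
proof -
  assume c: "connected_graph X" and u: "u \<in> verts X" and w: "w \<in> verts X"
  obtain W where W: "walk X u w W" "length W = dist X u w" using dist_walk[OF c u w] by blast
  have "walk X w u (rev_walk X W)" using walk_rev[OF _ W(1)] c by (auto simp: connected_graph_def)
  from dist_le[OF this] show ?thesis using W(2) by simp
qed

lemma dist_sym: "connected_graph X \<Longrightarrow> u \<in> verts X \<Longrightarrow> w \<in> verts X \<Longrightarrow> dist X w u = dist X u w"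
  by (intro le_antisym dist_sym_le)

lemma dist_step: "connected_graph X \<Longrightarrow> v \<in> verts X \<Longrightarrow> d \<in> darts X \<Longrightarrow>
    dist X v (head X d) \<le> dist X v (tl X d) + 1"
proof -
  assume c: "connected_graph X" and v: "v \<in> verts X" and d: "d \<in> darts X"
  have wf: "wf_graph X" using c by (simp add: connected_graph_def)
  obtain W where W: "walk X v (tl X d) W" "length W = dist X v (tl X d)"
    using dist_walk[OF c v wf_tl[OF wf d]] by blast
  have "walk X v (head X d) (W @ [d])" using walk_append_I[OF wf W(1)] d wf by (simp add: walk_Cons wf_head)
  from dist_le[OF this] show ?thesis using W(2) by simp
qed

lemma ball_ends:
  assumes c: "connected_graph X" and v: "v \<in> verts X" and d: "d \<in> ball_darts X v r"
  shows "tl X d \<in> ball_verts X v r \<and> head X d \<in> ball_verts X v r"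
proof -
  have wf: "wf_graph X" using c by (simp add: connected_graph_def)
  have dd: "d \<in> darts X" and s: "dist X v (tl X d) + 1 + dist X (head X d) v \<le> r"
    using d by (auto simp: ball_darts_def)
  have r: "rv X d \<in> darts X" "rv X (rv X d) = d" using wf_rv[OF wf dd] by auto
  have ht: "head X d \<in> verts X" "tl X d \<in> verts X" using wf_head[OF wf dd] wf_tl[OF wf dd] by auto
  have e1: "dist X v (head X d) \<le> dist X v (tl X d) + 1" using dist_step[OF c v dd] .
  have e2: "dist X v (tl X d) \<le> dist X v (head X d) + 1"
    using dist_step[OF c v r(1)] r by (simp add: head_def)
  have "dist X (head X d) v = dist X v (head X d)" using dist_sym[OF c v ht(1)] .
  then have "2 * dist X v (tl X d) \<le> r" "2 * dist X v (head X d) \<le> r" using s e1 e2 by linarith+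
  then show ?thesis using ht by (simp add: ball_verts_def)
qed

lemma closed_in_ball:
  assumes wf: "wf_graph G" and Q: "walk G y y Q" and len: "length Q \<le> r"
  shows "set Q \<subseteq> ball_darts G y r"
proof
  fix d assume "d \<in> set Q"
  then obtain xs ys where Qs: "Q = xs @ d # ys" by (meson split_list)
  then obtain m where m: "walk G y m xs" "walk G m y (d # ys)" using Q walk_append[OF wf, of y y xs "d # ys"] by auto
  then have d: "d \<in> darts G" "tl G d = m" "walk G (head G d) y ys" by (auto simp: walk_Cons wf)
  have "dist G y (tl G d) \<le> length xs" using dist_le[OF m(1)] d(2) by simp
  moreover have "dist G (head G d) y \<le> length ys" using dist_le[OF d(3)] by simp
  ultimately show "d \<in> ball_darts G y r" using d(1) Qs len by (auto simp: ball_darts_def)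
qed

lemma ball_lift:
  assumes c: "covering C G pv pd" and pb: "preserves_balls C G pv pd r"
    and yh: "yh \<in> verts C"
  shows "walk G u v W \<Longrightarrow> set W \<subseteq> ball_darts G (pv yh) r \<Longrightarrow> a \<in> ball_verts C yh r \<Longrightarrow> pv a = u
     \<Longrightarrow> lend C pd a W \<in> ball_verts C yh r"
proof (induction W arbitrary: u a)
  case Nil
  then show ?case by simp
next
  case (Cons d W)
  note wfG = cov_wfY[OF c] and cC = cov_conn[OF c]
  have bij: "bij_betw pv (ball_verts C yh r) (ball_verts G (pv yh) r)"
    "bij_betw pd (ball_darts C yh r) (ball_darts G (pv yh) r)"
    using pb yh cov_vert[OF c yh] by (auto simp: preserves_balls_def)
  from Cons.prems have d: "d \<in> darts G" "tl G d = u" "walk G (head G d) v W" by (auto simp: walk_Cons wfG)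
  have "d \<in> ball_darts G (pv yh) r" using Cons.prems(2) by auto
  then have "d \<in> pd ` ball_darts C yh r" using bij(2) by (simp add: bij_betw_def)
  then obtain e where e: "e \<in> ball_darts C yh r" "pd e = d" by auto
  have ed: "e \<in> darts C" using e by (simp add: ball_darts_def)
  have te: "tl C e \<in> ball_verts C yh r" "head C e \<in> ball_verts C yh r" using ball_ends[OF cC yh e(1)] by auto
  have "pv (tl C e) = pv a" using cov_dart[OF c ed] e d Cons.prems(4) by simp
  then have tea: "tl C e = a" using inj_onD[OF bij_betw_imp_inj_on[OF bij(1)] _ te(1) Cons.prems(3)] by simp
  have "dlift C pd a d = e" using dlift_unique[OF c ed tea e(2)] .
  then have "lend C pd a (d # W) = lend C pd (head C e) W" by simp
  moreover have "pv (head C e) = head G d" using cov_head[OF c ed] e by simp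
  ultimately show ?case using Cons.IH[OF d(3) _ te(2)] Cons.prems(2) by simp
qed

lemma cyc_C:
  assumes c: "covering C G pv pd" and pb: "preserves_balls C G pv pd r"
    and Q: "cycle_walk G y Q" and len: "length Q \<le> r" and z: "z \<in> verts C" "pv z = y"
  shows "lend C pd z Q = z"
proof -
  note wfG = cov_wfY[OF c] and cC = cov_conn[OF c]
  have Qw: "walk G y y Q" using Q by (simp add: cycle_walk_def)
  have zb: "z \<in> ball_verts C z r" using z dist_le[of C z z "[]"] by (simp add: ball_verts_def)
  have "lend C pd z Q \<in> ball_verts C z r"
    using ball_lift[OF c pb z(1) Qw _ zb z(2)] closed_in_ball[OF wfG Qw len] z(2) by simp
  moreover have "pv (lend C pd z Q) = y" using lend_walk[OF c z(1)] Qw z(2) by auto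
  moreover have "bij_betw pv (ball_verts C z r) (ball_verts G y r)"
    using pb z cov_vert[OF c z(1)] unfolding preserves_balls_def by blast
  ultimately show ?thesis using inj_onD[OF bij_betw_imp_inj_on, of pv "ball_verts C z r" _ "lend C pd z Q" z] zb z(2) by simp
qed


theorem lemma4p4:
  fixes G :: "('v, 'd) graph" and Gr :: "('a, 'b) graph" and C :: "('c, 'e) graph"
    and r :: nat and x0 :: 'v and xr :: 'a
    and prv :: "'a \<Rightarrow> 'v" and prd :: "'b \<Rightarrow> 'd"
    and pv :: "'c \<Rightarrow> 'v" and pd :: "'e \<Rightarrow> 'd"
  assumes "connected_graph G"
    and "x0 \<in> verts G"
    and "covering Gr G prv prd" and "xr \<in> verts Gr" and "prv xr = x0"
    and "char_subgroup Gr G prv prd xr = pi1r G r x0"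
    and "covering C G pv pd" and "preserves_balls C G pv pd r"
  shows "(\<exists>qv qd. covering Gr C qv qd \<and> (\<forall>v\<in>verts Gr. pv (qv v) = prv v)
                  \<and> (\<forall>d\<in>darts Gr. pd (qd d) = prd d))
       \<and> (\<forall>qv qd qv' qd'.
            covering Gr C qv qd \<and> (\<forall>v\<in>verts Gr. pv (qv v) = prv v) \<and> (\<forall>d\<in>darts Gr. pd (qd d) = prd d)
          \<and> covering Gr C qv' qd' \<and> (\<forall>v\<in>verts Gr. pv (qv' v) = prv v) \<and> (\<forall>d\<in>darts Gr. pd (qd' d) = prd d)
          \<longrightarrow> equivalent_coverings Gr qv qd Gr qv' qd')"
proof -
  note cGr = assms(3) and xr = assms(4) and pxr = assms(5) and chs = assms(6)
    and cC = assms(7) and pb = assms(8)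
  note wfG = cov_wfY[OF cGr] and wfGr = cov_wfX[OF cGr] and conGr = cov_conn[OF cGr]
  have PC: "lend C pd c U = c" if "c \<in> verts C" "pv c = x0" "U \<in> pi1r G r x0" for c U
  proof -
    have cycC: "\<And>y Q z. cycle_walk G y Q \<Longrightarrow> length Q \<le> r \<Longrightarrow> z \<in> verts C \<Longrightarrow> pv z = y \<Longrightarrow> lend C pd z Q = z"
      using cyc_C[OF cC pb] by blast
    show ?thesis by (rule pi1r_lend[OF cC cycC that])
  qed
  have charsub: "U \<in> pi1r G r x0" if U: "walk G x0 x0 U" "lend Gr prd xr U = xr" for U
  proof -
    obtain W' where W': "walk Gr xr xr W'" "map prd W' = U" using lend_walk[OF cGr xr] U pxr by force
    have "homotopic G x0 x0 U (map prd W')" unfolding homotopic_def using W'(2) by simp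
    then have "U \<in> char_subgroup Gr G prv prd xr" unfolding char_subgroup_def using U(1) W'(1) pxr by blast
    then show ?thesis using chs by simp
  qed
  have cycGr: "lend Gr prd z Q = z"
    if Q: "cycle_walk G y Q" "length Q \<le> r" and z: "z \<in> verts Gr" "prv z = y" for y Q z
  proof -
    have Qw: "walk G y y Q" using Q by (simp add: cycle_walk_def)
    obtain P where P: "walk Gr xr z P" using conn_walk[OF conGr xr z(1)] by blast
    define P' where "P' = map prd P"
    have P': "walk G x0 y P'" using map_walk[OF cGr P] pxr z(2) P'_def by simp
    define g where "g = P' @ Q @ rev_walk G P'"
    have gen: "pi1r_generator G r x0 g" unfolding pi1r_generator_def g_def using P' Q by blast
    have gw: "walk G x0 x0 g" unfolding g_def
      using walk_append_I[OF wfG P' walk_append_I[OF wfG Qw walk_rev[OF wfG P']]] .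
    have "homotopic G x0 x0 g (concat [g])" unfolding homotopic_def by simp
    then have "g \<in> pi1r G r x0" unfolding pi1r_def using gw gen
      by (intro CollectI conjI exI[of _ "[g]"]) auto
    then have "g \<in> char_subgroup Gr G prv prd xr" using chs by simp
    then obtain Wh where Wh: "walk Gr xr xr Wh" "homotopic G x0 x0 g (map prd Wh)"
      unfolding char_subgroup_def using pxr by auto
    have "lend Gr prd xr g = lend Gr prd xr (map prd Wh)" using lend_homotopic[OF cGr Wh(2) xr pxr] .
    also have "\<dots> = xr" using lend_map[OF cGr Wh(1)] .
    finally have e1: "lend Gr prd xr g = xr" .
    have lP: "lend Gr prd xr P' = z" unfolding P'_def using lend_map[OF cGr P] .
    have e1': "lend Gr prd (lend Gr prd z Q) (rev_walk G P') = xr" using e1 lP by (simp add: g_def lend_append)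
    have e2: "lend Gr prd z (rev_walk G P') = xr" using lend_rev[OF cGr xr, where W=P' and v=y] P' pxr lP by simp
    have a: "lend Gr prd z Q \<in> verts Gr" "prv (lend Gr prd z Q) = y" using lend_walk[OF cGr z(1)] Qw z(2) by auto
    show ?thesis using lend_inj[OF cGr a z walk_rev[OF wfG P']] e1' e2 by simp
  qed
  have PGr: "lend Gr prd z U = z" if "z \<in> verts Gr" "prv z = x0" "U \<in> pi1r G r x0" for z U
    by (rule pi1r_lend[OF cGr cycGr that])
  have S: "lend Gr prd xr U = xr"
    if z: "z \<in> verts Gr" "prv z = x0" and U: "walk G x0 x0 U" "lend Gr prd z U = z" for z U
  proof -
    obtain Wp where Wp: "walk Gr xr z Wp" using conn_walk[OF conGr xr z(1)] by blast
    define P where "P = map prd Wp"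
    have P: "walk G x0 x0 P" using map_walk[OF cGr Wp] pxr z(2) P_def by simp
    have lP: "lend Gr prd xr P = z" unfolding P_def using lend_map[OF cGr Wp] .
    define V where "V = P @ U @ rev_walk G P"
    have Vw: "walk G x0 x0 V" unfolding V_def
      using walk_append_I[OF wfG P walk_append_I[OF wfG U(1) walk_rev[OF wfG P]]] .
    have "lend Gr prd xr V = xr" using lend_rev[OF cGr xr, where W=P and v=x0] P pxr lP U(2) by (simp add: V_def lend_append)
    then have Vp: "V \<in> pi1r G r x0" using charsub[OF Vw] by simp
    define w where "w = lend Gr prd xr (rev_walk G P)"
    have Pr: "walk G x0 x0 (rev_walk G P)" using walk_rev[OF wfG P] .
    have w: "w \<in> verts Gr" "prv w = x0" using lend_walk[OF cGr xr] Pr pxr w_def by auto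
    have lwP: "lend Gr prd w P = xr"
      using lend_rev[OF cGr xr, where W="rev_walk G P" and v=x0] Pr pxr rev_walk_rev_walk[OF wfG walk_darts[OF P]] w_def by simp
    have "lend Gr prd w V = w" using PGr[OF w Vp] .
    then have e1: "lend Gr prd (lend Gr prd xr U) (rev_walk G P) = lend Gr prd xr (rev_walk G P)"
      using lwP w_def by (simp add: V_def lend_append)
    have a: "lend Gr prd xr U \<in> verts Gr" "prv (lend Gr prd xr U) = x0" using lend_walk[OF cGr xr] U(1) pxr by auto
    show ?thesis using lend_inj[OF cGr a xr pxr Pr] e1 by simp
  qed
  have ex: "\<exists>qv qd. covering Gr C qv qd \<and> (\<forall>v\<in>verts Gr. pv (qv v) = prv v)
                  \<and> (\<forall>d\<in>darts Gr. pd (qd d) = prd d)"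
  proof -
    have "x0 \<in> pv ` verts C" using cC assms(2) by (simp add: covering_def)
    then obtain ch where ch: "ch \<in> verts C" "pv ch = x0" by auto
    have "\<exists>hv hk. covering Gr C hv hk \<and> hv xr = ch \<and> (\<forall>v\<in>verts Gr. pv (hv v) = prv v)
            \<and> (\<forall>d\<in>darts Gr. pd (hk d) = prd d)"
    proof (rule lifting[OF cC cGr ch(1) xr])
      show "pv ch = prv xr" using ch pxr by simp
      fix U assume "walk G (prv xr) (prv xr) U" "lend Gr prd xr U = xr"
      then show "lend C pd ch U = ch" using PC[OF ch charsub] pxr by simp
    qed
    then show ?thesis by blast
  qed
  have un: "equivalent_coverings Gr qv qd Gr qv' qd'"
    if q: "covering Gr C qv qd" "\<forall>v\<in>verts Gr. pv (qv v) = prv v" "\<forall>d\<in>darts Gr. pd (qd d) = prd d"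
    and q': "covering Gr C qv' qd'" "\<forall>v\<in>verts Gr. pv (qv' v) = prv v" "\<forall>d\<in>darts Gr. pd (qd' d) = prd d"
    for qv qd qv' qd'
  proof -
    define c where "c = qv xr"
    have "c \<in> qv' ` verts Gr" using q(1) q'(1) xr c_def by (simp add: covering_def)
    then obtain y where y: "y \<in> verts Gr" "qv' y = c" by auto
    have py: "prv y = x0" using q'(2) y q(2) xr pxr c_def by metis
    obtain hv hk where h: "covering Gr Gr hv hk" "hv xr = y" "\<forall>v\<in>verts Gr. prv (hv v) = prv v"
      "\<forall>d\<in>darts Gr. prd (hk d) = prd d"
    proof -
      have "\<exists>hv hk. covering Gr Gr hv hk \<and> hv xr = y \<and> (\<forall>v\<in>verts Gr. prv (hv v) = prv v)
            \<and> (\<forall>d\<in>darts Gr. prd (hk d) = prd d)"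
      proof (rule lifting[OF cGr cGr y(1) xr])
        show "prv y = prv xr" using py pxr by simp
        fix U assume "walk G (prv xr) (prv xr) U" "lend Gr prd xr U = xr"
        then show "lend Gr prd y U = y" using PGr[OF y(1) py charsub] pxr by simp
      qed
      then show ?thesis using that by blast
    qed
    obtain gv gk where g: "covering Gr Gr gv gk" "gv y = xr" "\<forall>v\<in>verts Gr. prv (gv v) = prv v"
      "\<forall>d\<in>darts Gr. prd (gk d) = prd d"
    proof -
      have "\<exists>hv hk. covering Gr Gr hv hk \<and> hv y = xr \<and> (\<forall>v\<in>verts Gr. prv (hv v) = prv v)
            \<and> (\<forall>d\<in>darts Gr. prd (hk d) = prd d)"
      proof (rule lifting[OF cGr cGr xr y(1)])
        show "prv xr = prv y" using py pxr by simp
        fix U assume "walk G (prv y) (prv y) U" "lend Gr prd y U = y"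
        then show "lend Gr prd xr U = xr" using S[OF y(1) py] py by simp
      qed
      then show ?thesis using that by blast
    qed
    have mh: "morph Gr Gr hv hk" and mg: "morph Gr Gr gv gk" using h(1) g(1) by (auto intro: cov_morph)
    have gh: "(\<forall>v\<in>verts Gr. (gv \<circ> hv) v = id v) \<and> (\<forall>d\<in>darts Gr. (gk \<circ> hk) d = id d)"
    proof (rule morph_unique[OF cGr conGr xr morph_comp[OF mh mg] morph_id])
      show "\<forall>d\<in>darts Gr. prd ((gk \<circ> hk) d) = prd (id d)" using g(4) h(4) mh by (auto simp: morph_def)
      show "(gv \<circ> hv) xr = id xr" using g(2) h(2) by simp
    qed
    have hg: "(\<forall>v\<in>verts Gr. (hv \<circ> gv) v = id v) \<and> (\<forall>d\<in>darts Gr. (hk \<circ> gk) d = id d)"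
    proof (rule morph_unique[OF cGr conGr y(1) morph_comp[OF mg mh] morph_id])
      show "\<forall>d\<in>darts Gr. prd ((hk \<circ> gk) d) = prd (id d)" using g(4) h(4) mg by (auto simp: morph_def)
      show "(hv \<circ> gv) y = id y" using g(2) h(2) by simp
    qed
    have iso: "graph_iso Gr Gr hv hk"
      unfolding graph_iso_def
    proof (intro conjI)
      show "bij_betw hv (verts Gr) (verts Gr)"
        by (rule bij_betw_byWitness[of _ gv]) (use gh hg mh mg in \<open>auto simp: morph_def\<close>)
      show "bij_betw hk (darts Gr) (darts Gr)"
        by (rule bij_betw_byWitness[of _ gk]) (use gh hg mh mg in \<open>auto simp: morph_def\<close>)
      show "\<forall>d\<in>darts Gr. tl Gr (hk d) = hv (tl Gr d) \<and> rv Gr (hk d) = hk (rv Gr d)"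
        using mh by (simp add: morph_def)
    qed
    have eq: "(\<forall>v\<in>verts Gr. (qv' \<circ> hv) v = qv v) \<and> (\<forall>d\<in>darts Gr. (qd' \<circ> hk) d = qd d)"
    proof (rule morph_unique[OF cC conGr xr morph_comp[OF mh cov_morph[OF q'(1)]] cov_morph[OF q(1)]])
      show "\<forall>d\<in>darts Gr. pd ((qd' \<circ> hk) d) = pd (qd d)" using q(3) q'(3) h(4) mh by (auto simp: morph_def)
      show "(qv' \<circ> hv) xr = qv xr" using h(2) y(2) c_def by simp
    qed
    show ?thesis unfolding equivalent_coverings_def using iso eq by auto
  qed
  show ?thesis using ex un by blast
qed

end
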